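(* \[ f\left(n,24,\binom{24}{2} - 15\right) = \Omega\left(n^{9/8}\right). \]
   Context: For positive integers $n,k,\ell$, $f(n,k,\ell)$ denotes the minimum number of colors $|C|$ in a coloring $\chi:E\to C$ of the edges of the complete graph $K_n=(V,E)$ such that every set of $k$ vertices of $V$ spans (in the induced complete subgraph $K_k$) edges of at least $\ell$ distinct colors. The asymptotic notation refers to $n\to\infty$. *)

theory Defs
  imports "HOL-Analysis.Analysis" "HOL-Library.Landau_Symbols"
begin

definition edges_of :: "nat set \<Rightarrow> nat set set" where
  "edges_of V = {e. e \<subseteq> V \<and> card e = 2}"

definition good_colouring :: "nat \<Rightarrow> nat \<Rightarrow> nat \<Rightarrow> (nat set \<Rightarrow> nat) \<Rightarrow> bool" where
  "good_colouring n k l chi \<longleftrightarrow>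
     (\<forall>S. S \<subseteq> {..<n} \<and> card S = k \<longrightarrow> card (chi ` edges_of S) \<ge> l)"

text \<open>f(n,k,l): minimum number of colours used by such a colouring.
 (Colours are taken to be natural numbers w.l.o.g.; the number of colours is the size of the
 image of the edge set.)\<close>
definition f :: "nat \<Rightarrow> nat \<Rightarrow> nat \<Rightarrow> nat" where
  "f n k l = (LEAST c. \<exists>chi. good_colouring n k l chi \<and> card (chi ` edges_of {..<n}) = c)"

end

theory Submission
  imports Defs
begin

lemma card_edges_of: "finite S \<Longrightarrow> card (edges_of S) = card S choose 2"
  unfolding edges_of_def by (rule n_subsets)

lemma edges_of_mono: "S \<subseteq> T \<Longrightarrow> edges_of S \<subseteq> edges_of T"
  by (auto simp: edges_of_def)

lemma finite_edges_of: "finite S \<Longrightarrow> finite (edges_of S)"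
  unfolding edges_of_def by (rule finite_subset[of _ "Pow S"]) auto

lemma pad:
  assumes "finite T" "card T \<le> k" "T \<subseteq> V" "finite V" "k \<le> card V"
  shows "\<exists>S. T \<subseteq> S \<and> S \<subseteq> V \<and> card S = k"
proof -
  have "card (V - T) = card V - card T" using card_Diff_subset[OF assms(1) assms(3)] .
  hence "k - card T \<le> card (V - T)" using assms by simp
  then obtain R where R: "R \<subseteq> V - T" "card R = k - card T" "finite R"
    by (meson obtain_subset_with_card_n)
  have "card (T \<union> R) = card T + card R"
    using R assms(1) by (intro card_Un_disjoint) auto
  thus ?thesis using R assms by (intro exI[of _ "T \<union> R"]) auto
qed

lemma two_elem: "card e = 2 \<Longrightarrow> x \<in> e \<Longrightarrow> \<exists>y. y \<noteq> x \<and> e = {x,y}"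
  unfolding card_2_iff by auto

lemma card_pair: "x \<noteq> y \<Longrightarrow> card {x,y} = 2" by simp

locale col =
  fixes n :: nat and chi :: "nat set \<Rightarrow> nat"
  assumes good: "good_colouring n 24 261 chi" and n24: "24 \<le> n"
begin

definition K where "K = chi ` edges_of {..<n}"
definition m where "m = card K"

lemma bad:
  assumes "S \<subseteq> {..<n}" "card S \<le> 24" "E \<subseteq> edges_of S" "card (chi ` E) + 16 \<le> card E"
  shows False
proof -
  have fS: "finite S" using assms(1) finite_subset by blast
  obtain S' where S': "S \<subseteq> S'" "S' \<subseteq> {..<n}" "card S' = 24"
    using pad[OF fS assms(2) assms(1)] n24 by auto
  have fS': "finite S'" using S' finite_subset by blast
  have ce: "card (edges_of S') = 276" using card_edges_of[OF fS'] S' by (simp add: choose_two)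
  have fE': "finite (edges_of S')" using finite_edges_of[OF fS'] .
  have EE: "E \<subseteq> edges_of S'" using assms(3) edges_of_mono[OF S'(1)] by blast
  have "chi ` edges_of S' = chi ` (edges_of S' - E) \<union> chi ` E" using EE by blast
  hence "card (chi ` edges_of S') \<le> card (chi ` (edges_of S' - E)) + card (chi ` E)"
    by (metis card_Un_le)
  also have "card (chi ` (edges_of S' - E)) \<le> card (edges_of S' - E)"
    using card_image_le fE' by blast
  also have "card (edges_of S' - E) = 276 - card E"
    using card_Diff_subset[OF finite_subset[OF EE fE'] EE] ce by simp
  finally have "card (chi ` edges_of S') \<le> 276 - card E + card (chi ` E)" by simp
  moreover have "card E \<le> 276" using card_mono[OF fE' EE] ce by simp
  ultimately have "card (chi ` edges_of S') \<le> 260" using assms(4) by linarith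
  moreover have "card (chi ` edges_of S') \<ge> 261" using good S' unfolding good_colouring_def by auto
  ultimately show False by simp
qed

definition nb where "nb x a = {y\<in>{..<n}. y \<noteq> x \<and> chi {x,y} = a}"

lemma nb_le:
  assumes "x \<in> {..<n}" shows "card (nb x a) \<le> 16"
proof (rule ccontr)
  assume "\<not> ?thesis"
  hence "17 \<le> card (nb x a)" by simp
  then obtain N where N: "N \<subseteq> nb x a" "card N = 17" "finite N"
    by (rule obtain_subset_with_card_n)
  have xN: "x \<notin> N" using N by (auto simp: nb_def)
  have NV: "N \<subseteq> {..<n}" using N nb_def by auto
  define E where "E = (\<lambda>y. {x,y}) ` N"
  have inj: "inj_on (\<lambda>y. {x,y}) N" using xN by (auto simp: inj_on_def doubleton_eq_iff)
  have cE: "card E = 17" using card_image[OF inj] N E_def by simp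
  have "E \<subseteq> edges_of (insert x N)" unfolding E_def edges_of_def
  proof safe
    fix y assume "y \<in> N" thus "card {x,y} = 2" using xN card_pair[of x y] by blast
  qed
  moreover have "chi ` E \<subseteq> {a}" using N by (auto simp: E_def nb_def)
  hence "card (chi ` E) \<le> 1" using card_mono[of "{a}" "chi ` E"] by simp
  moreover have "card (insert x N) \<le> 24" using xN N by simp
  moreover have "insert x N \<subseteq> {..<n}" using NV assms by auto
  ultimately show False using bad[of "insert x N" E] cE by simp
qed


definition C where "C x = (\<lambda>y. chi {x,y}) ` ({..<n} - {x})"

lemma C_K: "x \<in> {..<n} \<Longrightarrow> C x \<subseteq> K"
  unfolding C_def K_def edges_of_def by (auto simp: card_insert_if intro!: imageI)

lemma finK: "finite K" unfolding K_def by (intro finite_imageI finite_edges_of) simp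

lemma C_lower:
  assumes "x \<in> {..<n}" shows "n - 1 \<le> 16 * card (C x)"
proof -
  have fC: "finite (C x)" using C_K[OF assms] finK finite_subset by blast
  have "{..<n} - {x} \<subseteq> (\<Union>a\<in>C x. nb x a)" unfolding C_def nb_def by auto
  hence "card ({..<n} - {x}) \<le> card (\<Union>a\<in>C x. nb x a)"
    using fC by (intro card_mono) (auto simp: nb_def)
  also have "\<dots> \<le> (\<Sum>a\<in>C x. card (nb x a))" by (rule card_UN_le[OF fC])
  also have "\<dots> \<le> (\<Sum>a\<in>C x. 16)" by (intro sum_mono nb_le[OF assms])
  finally show ?thesis using assms by simp
qed

definition NN where "NN c = {x\<in>{..<n}. c \<in> C x}"

lemma sum_swap: "(\<Sum>x\<in>{..<n}. card (C x)) = (\<Sum>c\<in>K. card (NN c))"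
proof -
  have fC: "\<forall>x\<in>{..<n}. finite (C x)" using C_K finK finite_subset by blast
  have "(\<Sum>x\<in>{..<n}. card (C x)) = card (SIGMA x:{..<n}. C x)"
    using fC by (simp add: card_SigmaI)
  also have "(SIGMA x:{..<n}. C x) = (\<lambda>(c,x). (x,c)) ` (SIGMA c:K. NN c)"
    using C_K unfolding NN_def by force
  also have "card \<dots> = card (SIGMA c:K. NN c)"
    by (rule card_image) (auto simp: inj_on_def)
  also have "\<dots> = (\<Sum>c\<in>K. card (NN c))"
    using finK by (simp add: card_SigmaI NN_def)
  finally show ?thesis .
qed

lemma K_ne: "K \<noteq> {}"
proof -
  have "{0,1} \<in> edges_of {..<n}" using n24 unfolding edges_of_def by auto
  thus ?thesis unfolding K_def by blast
qed

lemma m_pos: "m > 0" using K_ne finK unfolding m_def by (simp add: card_gt_0_iff)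

lemma exists_c1: "\<exists>c1\<in>K. n * (n - 1) \<le> 16 * m * card (NN c1)"
proof (rule ccontr)
  assume "\<not> ?thesis"
  hence lt: "\<forall>c\<in>K. 16 * m * card (NN c) < n * (n - 1)" by auto
  have "m * (n * (n - 1)) = (\<Sum>x\<in>{..<n}. m * (n - 1))" by simp
  also have "\<dots> \<le> (\<Sum>x\<in>{..<n}. m * (16 * card (C x)))"
    by (intro sum_mono mult_le_mono2 C_lower) auto
  also have "\<dots> = 16 * m * (\<Sum>x\<in>{..<n}. card (C x))" by (simp add: sum_distrib_left mult_ac)
  also have "\<dots> = (\<Sum>c\<in>K. 16 * m * card (NN c))" by (simp add: sum_swap sum_distrib_left)
  also have "\<dots> < (\<Sum>c\<in>K. n * (n - 1))"
    using lt finK K_ne by (intro sum_strict_mono) auto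
  also have "\<dots> = m * (n * (n - 1))" unfolding m_def by simp
  finally show False by simp
qed

end

lemma greedy:
  fixes R :: "'a \<Rightarrow> 'a \<Rightarrow> bool"
  assumes "finite A" "\<And>a b. R a b \<Longrightarrow> R b a" "\<And>a. a \<in> A \<Longrightarrow> card {b\<in>A. R a b} \<le> B"
    "j * (B+1) \<le> card A"
  shows "\<exists>T\<subseteq>A. card T = j \<and> (\<forall>a\<in>T. \<forall>b\<in>T. a \<noteq> b \<longrightarrow> \<not> R a b)"
  using assms(1,3,4)
proof (induction j arbitrary: A)
  case 0 thus ?case by (intro exI[of _ "{}"]) auto
next
  case (Suc j)
  hence "A \<noteq> {}" by auto
  then obtain a where a: "a \<in> A" by blast
  define X where "X = insert a {b\<in>A. R a b}"
  define A' where "A' = A - X"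
  have fA': "finite A'" using Suc.prems(1) A'_def by auto
  have XA: "X \<subseteq> A" using a X_def by auto
  have "card X \<le> Suc (card {b\<in>A. R a b})" unfolding X_def using Suc.prems(1) by (simp add: card_insert_if)
  hence cX: "card X \<le> B + 1" using Suc.prems(2)[OF a] by simp
  have "card A' = card A - card X" unfolding A'_def
    by (rule card_Diff_subset[OF finite_subset[OF XA Suc.prems(1)] XA])
  hence cA': "j * (B+1) \<le> card A'" using Suc.prems(3) cX by simp
  have pr: "card {b\<in>A'. R c b} \<le> B" if "c \<in> A'" for c
  proof -
    have "card {b\<in>A'. R c b} \<le> card {b\<in>A. R c b}"
      using Suc.prems(1) by (intro card_mono) (auto simp: A'_def)
    thus ?thesis using Suc.prems(2)[of c] that A'_def by simp
  qed
  from Suc.IH[OF fA' pr cA'] obtain T' where T': "T' \<subseteq> A'" "card T' = j"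
    "\<forall>a\<in>T'. \<forall>b\<in>T'. a \<noteq> b \<longrightarrow> \<not> R a b" by blast
  have aT': "a \<notin> T'" using T'(1) A'_def X_def by auto
  have fT': "finite T'" using T'(1) fA' finite_subset by blast
  have nR: "\<forall>b\<in>T'. \<not> R a b" using T'(1) A'_def X_def by auto
  show ?case
  proof (intro exI[of _ "insert a T'"] conjI)
    show "insert a T' \<subseteq> A" using a T'(1) A'_def by auto
    show "card (insert a T') = Suc j" using aT' fT' T'(2) by simp
    show "\<forall>x\<in>insert a T'. \<forall>y\<in>insert a T'. x \<noteq> y \<longrightarrow> \<not> R x y"
      using T'(3) nR assms(2) by blast
  qed
qed

locale col2 = col +
  fixes c1 assumes c1K: "c1 \<in> K"
begin

definition W where "W = NN c1"
definition p where "p u = (SOME y. y \<in> {..<n} \<and> y \<noteq> u \<and> chi {u,y} = c1)"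

lemma p_prop: assumes "u \<in> W" shows "p u \<in> {..<n}" "p u \<noteq> u" "chi {u, p u} = c1"
proof -
  from assms have "\<exists>y. y \<in> {..<n} \<and> y \<noteq> u \<and> chi {u,y} = c1"
    unfolding W_def NN_def C_def by auto
  from someI_ex[OF this] show "p u \<in> {..<n}" "p u \<noteq> u" "chi {u, p u} = c1"
    unfolding p_def by auto
qed

lemma W_sub: "W \<subseteq> {..<n}" unfolding W_def NN_def by auto

lemma inc_le:
  assumes "x \<in> {..<n}" "A \<subseteq> {e\<in>edges_of {..<n}. chi e = c}"
  shows "card {e\<in>A. x \<in> e} \<le> 16"
proof -
  have "{e\<in>A. x\<in>e} \<subseteq> (\<lambda>y. {x,y}) ` nb x c"
  proof
    fix e assume e: "e \<in> {e\<in>A. x\<in>e}"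
    hence "card e = 2" "e \<subseteq> {..<n}" "chi e = c" "x \<in> e" using assms(2) unfolding edges_of_def by auto
    then obtain y where "y \<noteq> x" "e = {x,y}" using two_elem by metis
    thus "e \<in> (\<lambda>y. {x,y}) ` nb x c" using \<open>e \<subseteq> _\<close> \<open>chi e = c\<close> unfolding nb_def by auto
  qed
  hence "card {e\<in>A. x\<in>e} \<le> card ((\<lambda>y. {x,y}) ` nb x c)"
    by (intro card_mono) (auto simp: nb_def)
  also have "\<dots> \<le> card (nb x c)" by (rule card_image_le) (auto simp: nb_def)
  also have "\<dots> \<le> 16" by (rule nb_le[OF assms(1)])
  finally show ?thesis .
qed


lemma few:
  assumes c0K: "c0 \<in> K" and c01: "c0 \<noteq> c1"
  shows "card {e\<in>edges_of W. chi e = c0} \<le> 3461"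
proof (rule ccontr)
  assume H: "\<not> ?thesis"
  define A where "A = {e\<in>edges_of W. chi e = c0}"
  have cA: "6 * (576+1) \<le> card A" using H A_def by simp
  have fW: "finite W" using W_sub finite_subset by blast
  have fA: "finite A" unfolding A_def using finite_edges_of[OF fW] by simp
  have AV: "A \<subseteq> {e\<in>edges_of {..<n}. chi e = c0}" using W_sub edges_of_mono A_def by blast
  have Ae: "e \<subseteq> W \<and> card e = 2 \<and> chi e = c0" if "e \<in> A" for e
    using that unfolding A_def edges_of_def by auto
  define cl where "cl e = e \<union> p ` e" for e
  define R where "R e e' \<longleftrightarrow> e' \<inter> cl e \<noteq> {} \<or> e \<inter> cl e' \<noteq> {}" for e e'
  have Rsym: "\<And>a b. R a b \<Longrightarrow> R b a" unfolding R_def by blast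
  have Rb: "card {b\<in>A. R a b} \<le> 576" if a: "a \<in> A" for a
  proof -
    define Z where "Z = {w\<in>W. p w \<in> a}"
    have sub: "{b\<in>A. R a b} \<subseteq> (\<Union>z\<in>cl a. {e\<in>A. z\<in>e}) \<union> (\<Union>w\<in>Z. {e\<in>A. w\<in>e})"
    proof
      fix b assume b: "b \<in> {b\<in>A. R a b}"
      hence bA: "b \<in> A" and "R a b" by auto
      hence "b \<inter> cl a \<noteq> {} \<or> a \<inter> cl b \<noteq> {}" unfolding R_def by auto
      thus "b \<in> (\<Union>z\<in>cl a. {e\<in>A. z\<in>e}) \<union> (\<Union>w\<in>Z. {e\<in>A. w\<in>e})"
      proof
        assume "b \<inter> cl a \<noteq> {}" thus ?thesis using bA by blast
      next
        assume "a \<inter> cl b \<noteq> {}"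
        then obtain z where z: "z \<in> a" "z \<in> b \<or> z \<in> p ` b" unfolding cl_def by blast
        from z(2) show ?thesis
        proof
          assume "z \<in> b"
          moreover have "z \<in> cl a" using z(1) unfolding cl_def by blast
          ultimately show ?thesis using bA by blast
        next
          assume "z \<in> p ` b"
          then obtain w where "w \<in> b" "z = p w" by blast
          hence "w \<in> Z" using Ae[OF bA] z(1) unfolding Z_def by blast
          thus ?thesis using \<open>w \<in> b\<close> bA by blast
        qed
      qed
    qed
    have aW: "a \<subseteq> W" and ca: "card a = 2" using Ae[OF a] by auto
    have fa: "finite a" using ca by (intro card_ge_0_finite) simp
    have clV: "cl a \<subseteq> {..<n}" using aW p_prop W_sub unfolding cl_def by blast
    have fcl: "finite (cl a)" unfolding cl_def using fa by simp
    have ccl: "card (cl a) \<le> 4"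
    proof -
      have "card (cl a) \<le> card a + card (p ` a)" unfolding cl_def by (rule card_Un_le)
      also have "card (p ` a) \<le> card a" using card_image_le[OF fa] .
      finally show ?thesis using ca by simp
    qed
    have ZU: "Z \<subseteq> (\<Union>z\<in>a. nb z c1)"
    proof
      fix w assume "w \<in> Z"
      hence w: "w \<in> W" "p w \<in> a" unfolding Z_def by auto
      have "chi {p w, w} = c1" using p_prop(3)[OF w(1)] by (simp add: insert_commute)
      hence "w \<in> nb (p w) c1" unfolding nb_def using p_prop(2)[OF w(1)] W_sub w(1) by auto
      thus "w \<in> (\<Union>z\<in>a. nb z c1)" using w(2) by blast
    qed
    have cZ: "card Z \<le> 32"
    proof -
      have "card Z \<le> card (\<Union>z\<in>a. nb z c1)"
        using fa ZU by (intro card_mono) (auto simp: nb_def)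
      also have "\<dots> \<le> (\<Sum>z\<in>a. card (nb z c1))" by (rule card_UN_le[OF fa])
      also have "\<dots> \<le> (\<Sum>z\<in>a. 16)" using aW W_sub by (intro sum_mono nb_le) auto
      finally show ?thesis using ca by simp
    qed
    have fZ: "finite Z" using fW unfolding Z_def by simp
    have "card {b\<in>A. R a b} \<le> card ((\<Union>z\<in>cl a. {e\<in>A. z\<in>e}) \<union> (\<Union>w\<in>Z. {e\<in>A. w\<in>e}))"
      using sub fA by (intro card_mono finite_UnI finite_UN_I fcl fZ) auto
    also have "\<dots> \<le> card (\<Union>z\<in>cl a. {e\<in>A. z\<in>e}) + card (\<Union>w\<in>Z. {e\<in>A. w\<in>e})"
      by (rule card_Un_le)
    also have "card (\<Union>z\<in>cl a. {e\<in>A. z\<in>e}) \<le> (\<Sum>z\<in>cl a. card {e\<in>A. z\<in>e})"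
      by (rule card_UN_le[OF fcl])
    also have "\<dots> \<le> (\<Sum>z\<in>cl a. 16)" using clV AV by (intro sum_mono inc_le) auto
    also have "card (\<Union>w\<in>Z. {e\<in>A. w\<in>e}) \<le> (\<Sum>w\<in>Z. card {e\<in>A. w\<in>e})"
      by (rule card_UN_le[OF fZ])
    also have "\<dots> \<le> (\<Sum>w\<in>Z. 16)" using W_sub AV unfolding Z_def by (intro sum_mono inc_le) auto
    finally show ?thesis using ccl cZ by simp
  qed
  obtain T where T: "T \<subseteq> A" "card T = 6" "\<forall>a\<in>T. \<forall>b\<in>T. a \<noteq> b \<longrightarrow> \<not> R a b"
    using greedy[of A R 576 6, OF fA Rsym Rb cA] by auto
  have Te: "e \<subseteq> W \<and> card e = 2 \<and> chi e = c0" if "e \<in> T" for e using Ae T(1) that by blast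
  define U where "U = \<Union>T"
  have UW: "U \<subseteq> W" unfolding U_def using Te by blast
  have pnot: "p u \<notin> U" if u: "u \<in> U" for u
  proof
    assume pu: "p u \<in> U"
    obtain e where e: "e \<in> T" "u \<in> e" using u unfolding U_def by blast
    obtain e' where e': "e' \<in> T" "p u \<in> e'" using pu unfolding U_def by blast
    have uW: "u \<in> W" using UW u by blast
    show False
    proof (cases "e = e'")
      case True
      obtain y where y: "y \<noteq> u" "e = {u,y}" using two_elem Te[OF e(1)] e(2) by metis
      have "p u = y" using e' True y p_prop(2)[OF uW] by auto
      hence "chi e = c1" using y p_prop(3)[OF uW] by simp
      thus False using Te[OF e(1)] c01 by simp
    next
      case False
      hence "\<not> R e e'" using T(3) e(1) e'(1) by blast
      moreover have "p u \<in> e' \<inter> cl e" using e e' unfolding cl_def by blast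
      ultimately show False unfolding R_def by blast
    qed
  qed
  have disj: "pairwise disjnt T"
    unfolding pairwise_def disjnt_def
  proof (intro ballI impI)
    fix e e' assume "e \<in> T" "e' \<in> T" "e \<noteq> e'"
    hence "\<not> R e e'" using T(3) by blast
    thus "e \<inter> e' = {}" unfolding R_def cl_def by blast
  qed
  have fT: "finite T" using fA T(1) finite_subset by blast
  have fe: "finite e" if "e \<in> T" for e
  proof -
    have "card e = 2" using Te[OF that] by simp
    thus ?thesis by (intro card_ge_0_finite) simp
  qed
  have cU: "card U = 12"
  proof -
    have "card U = sum card T" unfolding U_def
      by (rule card_Union_disjoint[OF disj fe])
    also have "\<dots> = sum (\<lambda>e. 2) T" using Te by (intro sum.cong) auto
    finally show ?thesis using T(2) by simp
  qed
  have fU: "finite U" using UW fW finite_subset by blast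
  define E1 where "E1 = (\<lambda>u. {u, p u}) ` U"
  have inj: "inj_on (\<lambda>u. {u, p u}) U"
  proof (rule inj_onI)
    fix u v assume uv: "u \<in> U" "v \<in> U" "{u, p u} = {v, p v}"
    hence "u \<in> {v, p v}" by blast
    moreover have "u \<noteq> p v" using pnot[OF uv(2)] uv(1) by blast
    ultimately show "u = v" by blast
  qed
  have cE1: "card E1 = 12" unfolding E1_def using card_image[OF inj] cU by simp
  define S where "S = U \<union> p ` U"
  have cS: "card S \<le> 24"
  proof -
    have "card S \<le> card U + card (p ` U)" unfolding S_def by (rule card_Un_le)
    also have "card (p ` U) \<le> card U" using card_image_le[OF fU] .
    finally show ?thesis using cU by simp
  qed
  have SV: "S \<subseteq> {..<n}" unfolding S_def using UW W_sub p_prop(1) by blast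
  have TE1: "T \<inter> E1 = {}"
  proof -
    { fix e assume "e \<in> T" "e \<in> E1"
      then obtain u where "u \<in> U" "e = {u, p u}" unfolding E1_def by blast
      hence "chi e = c1" using p_prop(3) UW by blast
      hence False using Te[OF \<open>e \<in> T\<close>] c01 by simp }
    thus ?thesis by blast
  qed
  have fE1: "finite E1" unfolding E1_def using fU by simp
  have cE: "card (T \<union> E1) = 18" using card_Un_disjoint[OF fT fE1 TE1] T(2) cE1 by simp
  have Esub: "T \<union> E1 \<subseteq> edges_of S"
  proof
    fix e assume "e \<in> T \<union> E1"
    thus "e \<in> edges_of S"
    proof
      assume eT: "e \<in> T"
      hence "e \<subseteq> U" unfolding U_def by blast
      thus ?thesis using Te[OF eT] unfolding edges_of_def S_def by blast
    next
      assume "e \<in> E1"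
      then obtain u where u: "u \<in> U" "e = {u, p u}" unfolding E1_def by blast
      have "p u \<noteq> u" using u(1) UW p_prop(2) by blast
      hence "card e = 2" using u(2) by (simp add: card_insert_if)
      thus ?thesis using u unfolding edges_of_def S_def by blast
    qed
  qed
  have "chi ` (T \<union> E1) \<subseteq> {c0, c1}"
    using Te p_prop(3) UW unfolding E1_def by auto
  hence "card (chi ` (T \<union> E1)) \<le> card {c0, c1}" by (intro card_mono) auto
  also have "card {c0, c1} \<le> 2" by (simp add: card_insert_if)
  finally have "card (chi ` (T \<union> E1)) \<le> 2" .
  thus False using bad[OF SV cS Esub] cE by simp
qed


lemma countW: "card W choose 2 \<le> 3461 * m + 16 * card W"
proof -
  have fW: "finite W" using W_sub finite_subset by blast
  define B1 where "B1 = {e\<in>edges_of {..<n}. chi e = c1}"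
  have sub: "edges_of W \<subseteq> (\<Union>x\<in>W. {e\<in>B1. x \<in> e}) \<union> (\<Union>c\<in>K - {c1}. {e\<in>edges_of W. chi e = c})"
  proof
    fix e assume e: "e \<in> edges_of W"
    hence eV: "e \<in> edges_of {..<n}" using edges_of_mono[OF W_sub] by blast
    hence cK: "chi e \<in> K" unfolding K_def by blast
    show "e \<in> (\<Union>x\<in>W. {e\<in>B1. x \<in> e}) \<union> (\<Union>c\<in>K - {c1}. {e\<in>edges_of W. chi e = c})"
    proof (cases "chi e = c1")
      case True
      from e have "card e = 2" "e \<subseteq> W" unfolding edges_of_def by auto
      then obtain x where "x \<in> e" unfolding card_2_iff by blast
      thus ?thesis using True eV \<open>e \<subseteq> W\<close> unfolding B1_def by blast
    next
      case False thus ?thesis using e cK by blast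
    qed
  qed
  have "card W choose 2 = card (edges_of W)" using card_edges_of[OF fW] by simp
  also have "\<dots> \<le> card ((\<Union>x\<in>W. {e\<in>B1. x \<in> e}) \<union> (\<Union>c\<in>K - {c1}. {e\<in>edges_of W. chi e = c}))"
    using sub fW finK by (intro card_mono) (auto simp: B1_def intro!: finite_UN_I finite_UnI finite_edges_of)
  also have "\<dots> \<le> card (\<Union>x\<in>W. {e\<in>B1. x \<in> e}) + card (\<Union>c\<in>K - {c1}. {e\<in>edges_of W. chi e = c})"
    by (rule card_Un_le)
  also have "card (\<Union>x\<in>W. {e\<in>B1. x \<in> e}) \<le> (\<Sum>x\<in>W. card {e\<in>B1. x \<in> e})"
    by (rule card_UN_le[OF fW])
  also have "\<dots> \<le> (\<Sum>x\<in>W. 16)"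
  proof (rule sum_mono)
    fix x assume "x \<in> W"
    hence "x \<in> {..<n}" using W_sub by blast
    moreover have "B1 \<subseteq> {e\<in>edges_of {..<n}. chi e = c1}" unfolding B1_def by simp
    ultimately show "card {e\<in>B1. x \<in> e} \<le> 16" by (rule inc_le)
  qed
  also have "card (\<Union>c\<in>K - {c1}. {e\<in>edges_of W. chi e = c}) \<le> (\<Sum>c\<in>K - {c1}. card {e\<in>edges_of W. chi e = c})"
    using finK by (intro card_UN_le) auto
  also have "\<dots> \<le> (\<Sum>c\<in>K - {c1}. 3461)" by (intro sum_mono few) auto
  also have "\<dots> \<le> 3461 * m" unfolding m_def using card_Diff1_le[of K c1] by simp
  finally show ?thesis by simp
qed

end

lemma numeric:
  fixes N M w :: real
  assumes "N \<ge> 2" "M \<ge> 1" "N*N \<le> 16*M*w + N" "w \<le> N" "w \<ge> 0"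
    "w*w \<le> 6922*M + 33*w + 1"
  shows "N^4 \<le> 14176256 * M^3"
proof -
  have h1: "w^2 \<le> 6922*M + 34*N" using assms by (simp add: power2_eq_square)
  have h0: "0 \<le> N*(N-1)" using assms by simp
  have "N*(N-1) \<le> 16*M*w" using assms by (simp add: algebra_simps)
  hence h2: "(N*(N-1))^2 \<le> (16*M*w)^2" using h0 by (rule power_mono)
  have h3: "N^4 \<le> 4*(N*(N-1))^2"
  proof -
    have "N \<le> 2*(N-1)" using assms by simp
    hence "N^2 \<le> (2*(N-1))^2" using assms by (intro power_mono) auto
    hence "N^2 * N^2 \<le> N^2 * (2*(N-1))^2" by (intro mult_left_mono) auto
    moreover have "N^4 = N^2*N^2" by algebra
    moreover have "4*(N*(N-1))^2 = N^2*(2*(N-1))^2" by algebra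
    ultimately show ?thesis by linarith
  qed
  have h4: "N^4 \<le> 1024 * M^2 * w^2" using h2 h3 by (simp add: power_mult_distrib)
  also have "\<dots> \<le> 1024 * M^2 * (6922*M + 34*N)" using h1 by (intro mult_left_mono) auto
  finally have h5: "N^4 \<le> 1024 * M^2 * (6922*M + 34*N)" .
  show ?thesis
  proof (cases "34*N \<le> 6922*M")
    case True
    hence "1024 * M^2 * (6922*M + 34*N) \<le> 1024 * M^2 * (13844*M)" by (intro mult_left_mono) auto
    thus ?thesis using h5 by (simp add: power2_eq_square power3_eq_cube)
  next
    case False
    hence "1024 * M^2 * (6922*M + 34*N) \<le> 1024 * M^2 * (68*N)" by (intro mult_left_mono) auto
    moreover have "1024 * M^2 * (68*N) = 69632 * M^2 * N" by simp
    ultimately have A: "N^4 \<le> 69632 * M^2 * N" using h5 by linarith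
    have "6922*M \<le> 34*N" using False by simp
    hence "(6922*M)^2 \<le> (34*N)^2" using assms by (intro power_mono) auto
    hence B: "47914084 * M^2 \<le> 1156 * N^2" by (simp add: power_mult_distrib)
    have e2: "69632 * N * (47914084 * M^2) = 47914084 * (69632 * M^2 * N)" by (simp add: algebra_simps)
    have "47914084 * N^4 \<le> 69632 * N * (47914084 * M^2)" using A e2 by linarith
    also have "\<dots> \<le> 69632 * N * (1156 * N^2)" using B assms by (intro mult_left_mono) auto
    finally have "47914084 * N^4 \<le> 80494592 * N^3" by (simp add: power2_eq_square power3_eq_cube)
    hence "N^3 * (47914084 * N) \<le> N^3 * 80494592" by (simp add: power_numeral_reduce algebra_simps)
    hence "47914084 * N \<le> 80494592" using assms by (simp add: mult_le_cancel_left)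
    thus ?thesis using assms by simp
  qed
qed

context col begin

lemma main: "real n ^ 4 \<le> 14176256 * real m ^ 3"
proof -
  obtain c1 where c1: "c1 \<in> K" "n * (n - 1) \<le> 16 * m * card (NN c1)" using exists_c1 by blast
  interpret col2 n chi c1 using c1(1) by unfold_locales
  define w where "w = card W"
  have wn: "w \<le> n" unfolding w_def using card_mono[OF _ W_sub] by simp
  have cw: "w choose 2 \<le> 3461 * m + 16 * w" using countW w_def by simp
  have dv: "\<And>x::nat. x \<le> 2 * (x div 2) + 1" by presburger
  have "w * (w - 1) \<le> 2 * (w choose 2) + 1" unfolding choose_two by (rule dv)
  moreover have "w * w = w * (w - 1) + w" by (cases w) auto
  ultimately have h: "w * w \<le> 6922 * m + 33 * w + 1" using cw by linarith
  have "real (w * w) \<le> real (6922 * m + 33 * w + 1)" using h by (simp only: of_nat_le_iff)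
  hence r1: "real w * real w \<le> 6922 * real m + 33 * real w + 1" by simp
  have "n * n = n * (n - 1) + n" by (cases n) auto
  hence h2: "n * n \<le> 16 * m * w + n" using c1(2) unfolding w_def W_def by linarith
  have "real (n * n) \<le> real (16 * m * w + n)" using h2 by (simp only: of_nat_le_iff)
  hence r2: "real n * real n \<le> 16 * real m * real w + real n" by simp
  have mp: "real m \<ge> 1" using m_pos by simp
  have a1: "real n \<ge> 2" using n24 by simp
  have a2: "real w \<le> real n" using wn by simp
  have a3: "real w \<ge> 0" by simp
  show ?thesis by (rule numeric[OF a1 mp r2 a2 a3 r1])
qed

end

lemma two_minmax:
  assumes "card e = 2" shows "e = {Min e, Max e}"
proof -
  obtain x y where xy: "e = {x,y}" "x \<noteq> y" using assms unfolding card_2_iff by blast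
  show ?thesis
  proof (cases "x \<le> y")
    case True thus ?thesis using xy by (simp add: min_def max_def)
  next
    case False
    hence "Min e = y" "Max e = x" using xy by auto
    thus ?thesis using xy by (simp add: insert_commute)
  qed
qed

lemma exists_good: "\<exists>chi. good_colouring n 24 261 chi"
proof -
  define chi0 where "chi0 e = to_nat (Min e, Max e)" for e :: "nat set"
  have inj: "inj_on chi0 (edges_of S)" for S
  proof (rule inj_onI)
    fix e e' assume e: "e \<in> edges_of S" "e' \<in> edges_of S" "chi0 e = chi0 e'"
    hence "(Min e, Max e) = (Min e', Max e')" unfolding chi0_def by simp
    moreover have "e = {Min e, Max e}" "e' = {Min e', Max e'}"
      using e two_minmax unfolding edges_of_def by auto
    ultimately show "e = e'" by simp
  qed
  have "good_colouring n 24 261 chi0"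
    unfolding good_colouring_def
  proof (intro allI impI)
    fix S assume S: "S \<subseteq> {..<n} \<and> card S = 24"
    hence fS: "finite S" using finite_subset by blast
    have "card (chi0 ` edges_of S) = card (edges_of S)" by (rule card_image[OF inj])
    also have "\<dots> = 276" using card_edges_of[OF fS] S by (simp add: choose_two)
    finally show "261 \<le> card (chi0 ` edges_of S)" by simp
  qed
  thus ?thesis by blast
qed

lemma key:
  assumes "n \<ge> 24"
  shows "real n powr (9/8) / 14176256 \<le> real (f n 24 261)"
proof -
  obtain chi0 where "good_colouring n 24 261 chi0" using exists_good by blast
  hence "\<exists>c. \<exists>chi. good_colouring n 24 261 chi \<and> card (chi ` edges_of {..<n}) = c" by blast
  from LeastI_ex[OF this]
  have "\<exists>chi. good_colouring n 24 261 chi \<and> card (chi ` edges_of {..<n}) = (LEAST c. \<exists>chi. good_colouring n 24 261 chi \<and> card (chi ` edges_of {..<n}) = c)" .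
  then obtain chi where chi: "good_colouring n 24 261 chi" "card (chi ` edges_of {..<n}) = f n 24 261"
    unfolding f_def by blast
  interpret col n chi using chi(1) assms by unfold_locales
  have M: "real n ^ 4 \<le> 14176256 * real m ^ 3" by (rule main)
  have mf: "m = f n 24 261" using chi(2) unfolding m_def K_def by simp
  define x where "x = real n powr (9/8) / 14176256"
  have n1: "real n \<ge> 1" using assms by simp
  have x0: "x \<ge> 0" unfolding x_def by simp
  have p1: "(real n powr (9/8)) ^ 3 = real n powr (27/8)" using n1 by (subst powr_power) auto
  have p2: "real n powr (27/8) \<le> real n powr (real 4)" using n1 by (intro powr_mono) auto
  have p3: "real n powr (real 4) = real n ^ 4" using n1 by (intro powr_realpow) auto
  have "x ^ 3 = (real n powr (9/8)) ^ 3 / 14176256 ^ 3" unfolding x_def by (simp add: power_divide)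
  also have "\<dots> \<le> real n ^ 4 / 14176256 ^ 3" using p1 p2 p3 by (intro divide_right_mono) auto
  also have "\<dots> \<le> real n ^ 4 / 14176256" by (intro divide_left_mono) auto
  also have "\<dots> \<le> real m ^ 3" using M by simp
  finally have "x ^ 3 \<le> real m ^ 3" .
  hence "x \<le> real m"
  proof (rule contrapos_pp)
    assume "\<not> x \<le> real m"
    hence "real m ^ 3 < x ^ 3" by (intro power_strict_mono) auto
    thus "\<not> x ^ 3 \<le> real m ^ 3" by simp
  qed
  thus ?thesis unfolding x_def mf .
qed

theorem theorem1p3:
  shows "(\<lambda>n. real (f n 24 ((24 choose 2) - 15))) \<in> \<Omega>(\<lambda>n. real n powr (9/8))"
proof -
  have l: "(24 choose 2) - 15 = (261::nat)" by (simp add: choose_two)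
  show ?thesis unfolding l
  proof (rule landau_omega.bigI[of "1/14176256"])
    show "eventually (\<lambda>n. norm (real (f n 24 261)) \<ge> 1/14176256 * norm (real n powr (9/8))) at_top"
      using eventually_ge_at_top[of "24::nat"]
    proof eventually_elim
      case (elim n)
      thus ?case using key[OF elim] by simp
    qed
  qed simp
qed

end
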